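(* Let $G_1,G_2,\dots$ be 3-symmetric graphs with $|G_i|\to\infty$, and let $H$ be a 3-symmetric graph with at least one vertex. Then as $i\to\infty$, \[t(K_3,\mathrm{Inflate}(G_i,H))\to\tfrac18,\quad t(P_3,\mathrm{Inflate}(G_i,H))\to\tfrac38,\quad t(K_2\cup K_1,\mathrm{Inflate}(G_i,H))\to\tfrac38,\quad t(\overline{K_3},\mathrm{Inflate}(G_i,H))\to\tfrac18.\]
   Context: All graphs are finite and simple; $|G|$ denotes the number of vertices. For a graph $G$ on $n$ vertices and a graph $F$ on $k$ vertices, the density $t(F,G)$ is the number of $k$-element subsets $S\subseteq V(G)$ whose induced subgraph is isomorphic to $F$, divided by $\binom{n}{k}$ (and $0$ if $n<k$). $K_3$ is the triangle, $P_3$ the path with 3 vertices and 2 edges, $K_2\cup K_1$ the 3-vertex graph with exactly one edge, and $\overline{K_3}$ the 3-vertex graph with no edges. A graph with at least 3 vertices is 3-symmetric if its densities of $K_3,P_3,K_2\cup K_1,\overline{K_3}$ are $1/8,3/8,3/8,1/8$ respectively; graphs with fewer than 3 vertices are considered trivially 3-symmetric. The inflation $\mathrm{Inflate}(G,H)$ (lexicographic product) is the graph with vertex set $V(G)\times V(H)$ in which $(g,h)$ and $(g',h')$ are adjacent iff either $g$ and $g'$ are adjacent in $G$, or $g=g'$ and $h,h'$ are adjacent in $H$. *)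

theory Defs
  imports Complex_Main
begin

type_synonym 'a graph = "'a set \<times> ('a \<Rightarrow> 'a \<Rightarrow> bool)"

definition simple_graph :: "'a graph \<Rightarrow> bool" where
  "simple_graph G \<longleftrightarrow> finite (fst G)
     \<and> (\<forall>x y. snd G x y \<longrightarrow> x \<in> fst G \<and> y \<in> fst G)
     \<and> (\<forall>x y. snd G x y \<longrightarrow> snd G y x)
     \<and> (\<forall>x. \<not> snd G x x)"

definition induced_iso :: "'a graph \<Rightarrow> 'a set \<Rightarrow> 'b graph \<Rightarrow> bool" where
  "induced_iso G S F \<longleftrightarrow> (\<exists>f. bij_betw f S (fst F) \<and>
      (\<forall>x\<in>S. \<forall>y\<in>S. snd G x y \<longleftrightarrow> snd F (f x) (f y)))"

definition density :: "'b graph \<Rightarrow> 'a graph \<Rightarrow> real" where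
  "density F G = (let k = card (fst F); n = card (fst G) in
     if n < k then 0
     else real (card {S. S \<subseteq> fst G \<and> card S = k \<and> induced_iso G S F}) / real (n choose k))"

definition K3 :: "nat graph" where
  "K3 = ({0,1,2}, \<lambda>x y. x \<in> {0,1,2} \<and> y \<in> {0,1,2} \<and> x \<noteq> y)"

definition P3 :: "nat graph" where
  "P3 = ({0,1,2}, \<lambda>x y. {x,y} = {0,1} \<or> {x,y} = {1,2})"

definition K2K1 :: "nat graph" where
  "K2K1 = ({0,1,2}, \<lambda>x y. {x,y} = {0,1})"

definition coK3 :: "nat graph" where
  "coK3 = ({0,1,2}, \<lambda>x y. False)"

definition three_symmetric :: "'a graph \<Rightarrow> bool" where
  "three_symmetric G \<longleftrightarrow> (card (fst G) \<ge> 3 \<longrightarrow>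
     density K3 G = 1/8 \<and> density P3 G = 3/8 \<and> density K2K1 G = 3/8 \<and> density coK3 G = 1/8)"

definition inflate :: "'a graph \<Rightarrow> 'b graph \<Rightarrow> ('a \<times> 'b) graph" where
  "inflate G H = (fst G \<times> fst H,
     \<lambda>(g,h) (g',h'). (g,h) \<in> fst G \<times> fst H \<and> (g',h') \<in> fst G \<times> fst H \<and>
        (snd G g g' \<or> (g = g' \<and> snd H h h')))"

end

theory Submission
  imports Defs "HOL-Library.FuncSet"
begin

lemma choose2: "real (k choose 2) = real k*(real k - 1)/2"
proof (induction k)
  case 0 then show ?case by simp
next
  case (Suc k)
  have "(Suc k choose 2) = k + (k choose 2)" by (simp add: numeral_2_eq_2)
  then show ?case using Suc by (simp add: field_simps)
qed

lemma choose3: "real (k choose 3) = real k*(real k - 1)*(real k - 2)/6"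
proof (induction k)
  case 0 then show ?case by simp
next
  case (Suc k)
  have "(Suc k choose 3) = (k choose 2) + (k choose 3)" by (simp add: numeral_3_eq_3 numeral_2_eq_2)
  then show ?case using Suc choose2[of k] by (simp add: field_simps)
qed

lemma graph_fun_card:
  assumes "finite T"
  shows "card {S. S \<subseteq> T \<times> W \<and> inj_on fst S \<and> fst ` S = T} = card W ^ card T"
proof -
  let ?S = "{S. S \<subseteq> T \<times> W \<and> inj_on fst S \<and> fst ` S = T}"
  let ?g = "\<lambda>f. (\<lambda>t. (t, f t)) ` T"
  have inj: "inj_on ?g (PiE T (\<lambda>_. W))"
  proof (rule inj_onI)
    fix f f' assume f: "f \<in> PiE T (\<lambda>_. W)" and f': "f' \<in> PiE T (\<lambda>_. W)" and eq: "?g f = ?g f'"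
    show "f = f'"
    proof (rule PiE_ext[OF f f'])
      fix t assume t: "t \<in> T"
      then have "(t, f t) \<in> ?g f'" using eq by blast
      then show "f t = f' t" by auto
    qed
  qed
  have img: "?g ` PiE T (\<lambda>_. W) = ?S"
  proof
    show "?g ` PiE T (\<lambda>_. W) \<subseteq> ?S"
    proof
      fix S assume "S \<in> ?g ` PiE T (\<lambda>_. W)"
      then obtain f where f: "f \<in> PiE T (\<lambda>_. W)" and S: "S = ?g f" by blast
      have "S \<subseteq> T \<times> W" using f S by (auto simp: PiE_iff)
      moreover have "inj_on fst S" unfolding S by (rule inj_onI) auto
      moreover have "fst ` S = T" unfolding S image_image by simp
      ultimately show "S \<in> ?S" by blast
    qed
    show "?S \<subseteq> ?g ` PiE T (\<lambda>_. W)"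
    proof
      fix S assume S: "S \<in> ?S"
      then have S1: "S \<subseteq> T \<times> W" and S2: "inj_on fst S" and S3: "fst ` S = T" by auto
      define f where "f = (\<lambda>t\<in>T. snd (the_inv_into S fst t))"
      have inv: "the_inv_into S fst t \<in> S \<and> fst (the_inv_into S fst t) = t" if "t \<in> T" for t
      proof -
        have "t \<in> fst ` S" using S3 that by simp
        then show ?thesis using the_inv_into_into[OF S2 _ subset_refl] f_the_inv_into_f[OF S2] by blast
      qed
      have fP: "f \<in> PiE T (\<lambda>_. W)"
      proof -
        have "snd (the_inv_into S fst t) \<in> W" if "t \<in> T" for t
          using subsetD[OF S1 conjunct1[OF inv[OF that]]] by (simp add: mem_Times_iff)
        then show ?thesis unfolding f_def restrict_PiE_iff by blast
      qed
      have Sg: "S = ?g f"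
      proof
        show "S \<subseteq> ?g f"
        proof
          fix s assume s: "s \<in> S"
          have t: "fst s \<in> T" using S3 s by blast
          have i: "the_inv_into S fst (fst s) = s" by (rule the_inv_into_f_f[OF S2 s])
          have "f (fst s) = snd s" unfolding f_def using t i by simp
          then have "s = (fst s, f (fst s))" by simp
          then show "s \<in> ?g f" by (rule image_eqI[OF _ t])
        qed
        show "?g f \<subseteq> S"
        proof
          fix x assume "x \<in> ?g f"
          then obtain t where t: "t \<in> T" and x: "x = (t, f t)" by blast
          have "x = the_inv_into S fst t" using inv[OF t] x t by (simp add: f_def prod_eq_iff)
          then show "x \<in> S" using inv[OF t] by simp
        qed
      qed
      show "S \<in> ?g ` PiE T (\<lambda>_. W)" using Sg fP by (rule image_eqI[where f="?g"])
    qed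
  qed
  have "card ?S = card (PiE T (\<lambda>_. W))" using card_image[OF inj] img by simp
  also have "\<dots> = card W ^ card T" using assms by (simp add: card_PiE)
  finally show ?thesis .
qed

lemma good_card:
  assumes "finite V" "finite W" "TT \<subseteq> {T. T \<subseteq> V \<and> card T = k}"
  shows "card {S. S \<subseteq> V \<times> W \<and> inj_on fst S \<and> fst ` S \<in> TT} = card TT * card W ^ k"
proof -
  have "TT \<subseteq> Pow V" using assms(3) by blast
  then have fin: "finite TT" by (rule finite_subset) (simp add: assms(1))
  have eq: "{S. S \<subseteq> V \<times> W \<and> inj_on fst S \<and> fst ` S \<in> TT}
     = (\<Union>T\<in>TT. {S. S \<subseteq> T \<times> W \<and> inj_on fst S \<and> fst ` S = T})"
  proof (intro equalityI subsetI)
    fix S assume "S \<in> {S. S \<subseteq> V \<times> W \<and> inj_on fst S \<and> fst ` S \<in> TT}"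
    then have S: "S \<subseteq> V \<times> W" "inj_on fst S" "fst ` S \<in> TT" by auto
    have "S \<subseteq> fst ` S \<times> W"
    proof
      fix p assume p: "p \<in> S"
      have "fst p \<in> fst ` S" using p by (rule imageI)
      moreover have "snd p \<in> W" using p S(1) by (auto simp: mem_Times_iff)
      ultimately show "p \<in> fst ` S \<times> W" by (simp add: mem_Times_iff)
    qed
    then show "S \<in> (\<Union>T\<in>TT. {S. S \<subseteq> T \<times> W \<and> inj_on fst S \<and> fst ` S = T})"
      using S by (intro UN_I[of "fst ` S"]) auto
  next
    fix S assume "S \<in> (\<Union>T\<in>TT. {S. S \<subseteq> T \<times> W \<and> inj_on fst S \<and> fst ` S = T})"
    then obtain T where T: "T \<in> TT" "S \<subseteq> T \<times> W" "inj_on fst S" "fst ` S = T" by blast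
    then have "T \<subseteq> V" using assms(3) by blast
    then have "S \<subseteq> V \<times> W" using T(2) by blast
    then show "S \<in> {S. S \<subseteq> V \<times> W \<and> inj_on fst S \<and> fst ` S \<in> TT}" using T by simp
  qed
  have "card (\<Union>T\<in>TT. {S. S \<subseteq> T \<times> W \<and> inj_on fst S \<and> fst ` S = T})
      = (\<Sum>T\<in>TT. card {S. S \<subseteq> T \<times> W \<and> inj_on fst S \<and> fst ` S = T})"
  proof (rule card_UN_disjoint[OF fin])
    show "\<forall>T\<in>TT. finite {S. S \<subseteq> T \<times> W \<and> inj_on fst S \<and> fst ` S = T}"
    proof
      fix T assume "T \<in> TT"
      then have "T \<subseteq> V" using assms(3) by blast
      then have "finite T" using assms(1) by (rule finite_subset)
      then show "finite {S. S \<subseteq> T \<times> W \<and> inj_on fst S \<and> fst ` S = T}"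
      proof -
        have "{S. S \<subseteq> T \<times> W \<and> inj_on fst S \<and> fst ` S = T} \<subseteq> Pow (T \<times> W)" by blast
        moreover have "finite (Pow (T \<times> W))" using \<open>finite T\<close> assms(2) by simp
        ultimately show ?thesis by (rule finite_subset)
      qed
    qed
    show "\<forall>i\<in>TT. \<forall>j\<in>TT. i \<noteq> j \<longrightarrow>
      {S. S \<subseteq> i \<times> W \<and> inj_on fst S \<and> fst ` S = i} \<inter> {S. S \<subseteq> j \<times> W \<and> inj_on fst S \<and> fst ` S = j} = {}"
      by auto
  qed
  also have "\<dots> = (\<Sum>T\<in>TT. card W ^ k)"
  proof (rule sum.cong)
    fix T assume T: "T \<in> TT"
    then have TV: "T \<subseteq> V" "card T = k" using assms(3) by blast+
    have "finite T" by (rule finite_subset[OF TV(1) assms(1)])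
    then show "card {S. S \<subseteq> T \<times> W \<and> inj_on fst S \<and> fst ` S = T} = card W ^ k"
      using graph_fun_card[OF \<open>finite T\<close>, of W] TV(2) by simp
  qed simp
  finally show ?thesis using eq by simp
qed

lemma edge_transfer:
  assumes "simple_graph G" "simple_graph H" "S \<subseteq> fst G \<times> fst H" "inj_on fst S" "x \<in> S" "y \<in> S"
  shows "snd (inflate G H) x y \<longleftrightarrow> snd G (fst x) (fst y)"
proof -
  obtain a b c d where x: "x = (a,b)" and y: "y = (c,d)" by (cases x, cases y) auto
  have gi: "\<And>u. \<not> snd G u u" using assms(1) unfolding simple_graph_def by blast
  have hi: "\<And>u. \<not> snd H u u" using assms(2) unfolding simple_graph_def by blast
  have mem: "(a,b) \<in> fst G \<times> fst H" "(c,d) \<in> fst G \<times> fst H" using assms(3,5,6) x y by blast+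
  have eq: "snd (inflate G H) x y \<longleftrightarrow> (snd G a c \<or> (a = c \<and> snd H b d))"
    using mem unfolding x y inflate_def by simp
  show ?thesis
  proof (cases "x = y")
    case True
    then show ?thesis using eq gi hi x y by simp
  next
    case False
    then have "a \<noteq> c" using assms(4-6) x y unfolding inj_on_def by force
    then show ?thesis using eq x y by simp
  qed
qed

lemma iso_transfer:
  assumes "simple_graph G" "simple_graph H" "S \<subseteq> fst G \<times> fst H" "inj_on fst S"
  shows "induced_iso (inflate G H) S F \<longleftrightarrow> induced_iso G (fst ` S) F"
proof
  assume "induced_iso (inflate G H) S F"
  then obtain f where f: "bij_betw f S (fst F)"
    and e: "\<forall>x\<in>S. \<forall>y\<in>S. snd (inflate G H) x y \<longleftrightarrow> snd F (f x) (f y)"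
    by (auto simp: induced_iso_def)
  let ?h = "the_inv_into S fst"
  have h: "bij_betw ?h (fst ` S) S"
    by (rule bij_betw_the_inv_into[OF inj_on_imp_bij_betw[OF assms(4)]])
  have "bij_betw (f \<circ> ?h) (fst ` S) (fst F)" by (rule bij_betw_trans[OF h f])
  moreover have "\<forall>a\<in>fst`S. \<forall>b\<in>fst`S. snd G a b \<longleftrightarrow> snd F ((f\<circ>?h) a) ((f\<circ>?h) b)"
  proof (intro ballI)
    fix a b assume a: "a \<in> fst`S" and b: "b \<in> fst`S"
    then obtain x y where x: "x \<in> S" "a = fst x" and y: "y\<in>S" "b = fst y" by blast
    have hx: "?h a = x" using x assms(4) the_inv_into_f_f by fastforce
    have hy: "?h b = y" using y assms(4) the_inv_into_f_f by fastforce
    show "snd G a b \<longleftrightarrow> snd F ((f\<circ>?h) a) ((f\<circ>?h) b)"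
      using e x y hx hy edge_transfer[OF assms(1-4) x(1) y(1)] by simp
  qed
  ultimately show "induced_iso G (fst ` S) F" unfolding induced_iso_def by blast
next
  assume "induced_iso G (fst`S) F"
  then obtain g where g: "bij_betw g (fst`S) (fst F)"
    and e: "\<forall>a\<in>fst`S. \<forall>b\<in>fst`S. snd G a b \<longleftrightarrow> snd F (g a) (g b)"
    by (auto simp: induced_iso_def)
  have "bij_betw (g \<circ> fst) S (fst F)" by (rule bij_betw_trans[OF inj_on_imp_bij_betw[OF assms(4)] g])
  moreover have "\<forall>x\<in>S. \<forall>y\<in>S. snd (inflate G H) x y \<longleftrightarrow> snd F ((g\<circ>fst) x) ((g\<circ>fst) y)"
    using e edge_transfer[OF assms(1-4)] by auto
  ultimately show "induced_iso (inflate G H) S F" unfolding induced_iso_def by blast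
qed

lemma count_bounds:
  assumes sg: "simple_graph G" and sh: "simple_graph H"
  shows "card {T. T \<subseteq> fst G \<and> card T = 3 \<and> induced_iso G T F} * card (fst H) ^ 3
      \<le> card {S. S \<subseteq> fst G \<times> fst H \<and> card S = 3 \<and> induced_iso (inflate G H) S F} \<and>
    card {S. S \<subseteq> fst G \<times> fst H \<and> card S = 3 \<and> induced_iso (inflate G H) S F}
      + (card (fst G) choose 3) * card (fst H) ^ 3
    \<le> card {T. T \<subseteq> fst G \<and> card T = 3 \<and> induced_iso G T F} * card (fst H) ^ 3
      + ((card (fst G) * card (fst H)) choose 3)"
  (is "?P (fst G) (fst H)")
proof -
  define V where "V = fst G"
  define W where "W = fst H"
  define c where "c = card {T. T \<subseteq> V \<and> card T = 3 \<and> induced_iso G T F}"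
  define A where "A = {S. S \<subseteq> V \<times> W \<and> card S = 3 \<and> induced_iso (inflate G H) S F}"
  have fV: "finite V" using sg unfolding simple_graph_def V_def by blast
  have fW: "finite W" using sh unfolding simple_graph_def W_def by blast
  define TF where "TF = {T. T \<subseteq> V \<and> card T = 3 \<and> induced_iso G T F}"
  define TA where "TA = {T. T \<subseteq> V \<and> card T = 3}"
  define GF where "GF = {S. S \<subseteq> V \<times> W \<and> inj_on fst S \<and> fst ` S \<in> TF}"
  define GA where "GA = {S. S \<subseteq> V \<times> W \<and> inj_on fst S \<and> fst ` S \<in> TA}"
  define All where "All = {S. S \<subseteq> V \<times> W \<and> card S = 3}"
  have cGF: "card GF = c * card W ^ 3"
    unfolding GF_def c_def TF_def by (rule good_card[OF fV fW]) blast
  have cGA: "card GA = (card V choose 3) * card W ^ 3"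
  proof -
    have "card GA = card TA * card W ^ 3"
      unfolding GA_def TA_def by (rule good_card[OF fV fW]) blast
    moreover have "card TA = card V choose 3" unfolding TA_def by (rule n_subsets[OF fV])
    ultimately show ?thesis by simp
  qed
  have fVW: "finite (V \<times> W)" using fV fW by simp
  have cAll: "card All = (card V * card W) choose 3"
    unfolding All_def using n_subsets[OF fVW, of 3] by (simp add: card_cartesian_product)
  have fP: "finite (Pow (V \<times> W))" using fVW by simp
  have "All \<subseteq> Pow (V \<times> W)" unfolding All_def by blast
  then have finAll: "finite All" using fP by (rule finite_subset)
  have "A \<subseteq> Pow (V \<times> W)" unfolding A_def by blast
  then have finA: "finite A" using fP by (rule finite_subset)
  have "GF \<subseteq> Pow (V \<times> W)" unfolding GF_def by blast
  then have finGF: "finite GF" using fP by (rule finite_subset)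
  have "GA \<subseteq> Pow (V \<times> W)" unfolding GA_def by blast
  then have finGA: "finite GA" using fP by (rule finite_subset)
  have card3: "card S = 3" if "inj_on fst S" "fst ` S \<in> TA" for S
  proof -
    have "card (fst ` S) = 3" using that(2) unfolding TA_def by simp
    then show ?thesis using card_image[OF that(1)] by simp
  qed
  have iso: "induced_iso (inflate G H) S F \<longleftrightarrow> induced_iso G (fst ` S) F"
    if "S \<subseteq> V \<times> W" "inj_on fst S" for S
    using iso_transfer[OF sg sh that(1)[unfolded V_def W_def] that(2)] .
  have GF_A: "GF \<subseteq> A"
  proof
    fix S assume "S \<in> GF"
    then have S: "S \<subseteq> V \<times> W" "inj_on fst S" "fst ` S \<in> TF" unfolding GF_def by auto
    have "fst ` S \<in> TA" using S(3) unfolding TF_def TA_def by blast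
    then have "card S = 3" using card3 S(2) by blast
    moreover have "induced_iso (inflate G H) S F" using iso[OF S(1,2)] S(3) unfolding TF_def by blast
    ultimately show "S \<in> A" using S(1) unfolding A_def by blast
  qed
  have A_sub: "A \<subseteq> GF \<union> (All - GA)"
  proof
    fix S assume "S \<in> A"
    then have S: "S \<subseteq> V \<times> W" "card S = 3" "induced_iso (inflate G H) S F" unfolding A_def by auto
    show "S \<in> GF \<union> (All - GA)"
    proof (cases "inj_on fst S")
      case True
      have "fst ` S \<subseteq> V" using S(1) by auto
      moreover have "card (fst ` S) = 3" using card_image[OF True] S(2) by simp
      moreover have "induced_iso G (fst ` S) F" using iso[OF S(1) True] S(3) by blast
      ultimately have "fst ` S \<in> TF" unfolding TF_def by blast
      then show ?thesis using S(1) True unfolding GF_def by blast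
    next
      case False
      then have "S \<notin> GA" unfolding GA_def by blast
      moreover have "S \<in> All" using S unfolding All_def by blast
      ultimately show ?thesis by blast
    qed
  qed
  have GA_All: "GA \<subseteq> All"
  proof
    fix S assume "S \<in> GA"
    then have S: "S \<subseteq> V \<times> W" "inj_on fst S" "fst ` S \<in> TA" unfolding GA_def by auto
    then have "card S = 3" using card3 by blast
    then show "S \<in> All" using S(1) unfolding All_def by blast
  qed
  have l: "card GF \<le> card A" by (rule card_mono[OF finA GF_A])
  have le: "card GA \<le> card All" by (rule card_mono[OF finAll GA_All])
  have "card A \<le> card (GF \<union> (All - GA))"
    by (rule card_mono) (use finGF finAll A_sub in auto)
  also have "\<dots> \<le> card GF + card (All - GA)" by (rule card_Un_le)
  also have "card (All - GA) = card All - card GA" by (rule card_Diff_subset[OF finGA GA_All])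
  finally have "card A \<le> card GF + (card All - card GA)" .
  then have "card A + card GA \<le> card GF + card All" using le by linarith
  then show ?thesis using l cGF cGA cAll unfolding A_def c_def V_def W_def by simp
qed

lemma dens_bounds:
  assumes sg: "simple_graph G" and sh: "simple_graph H" and ne: "fst H \<noteq> {}"
    and F3: "card (fst F) = 3" and n3: "card (fst G) \<ge> 3"
  defines "r \<equiv> real ((card (fst G) choose 3) * card (fst H) ^ 3) / real ((card (fst G) * card (fst H)) choose 3)"
  shows "density F G * r \<le> density F (inflate G H) \<and> density F (inflate G H) \<le> density F G * r + 1 - r"
proof -
  define n where "n = card (fst G)"
  define m where "m = card (fst H)"
  define c where "c = card {T. T \<subseteq> fst G \<and> card T = 3 \<and> induced_iso G T F}"
  define A where "A = {S. S \<subseteq> fst G \<times> fst H \<and> card S = 3 \<and> induced_iso (inflate G H) S F}"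
  have cb: "c * m ^ 3 \<le> card A \<and> card A + (n choose 3) * m ^ 3 \<le> c * m ^ 3 + ((n * m) choose 3)"
    using count_bounds[OF sg sh, of F] unfolding c_def A_def n_def m_def .
  have fH: "finite (fst H)" using sh unfolding simple_graph_def by blast
  have m1: "m \<ge> 1" using fH ne unfolding m_def by (simp add: Suc_le_eq card_gt_0_iff)
  have fI: "fst (inflate G H) = fst G \<times> fst H" by (simp add: inflate_def)
  have cI: "card (fst (inflate G H)) = n * m" unfolding fI n_def m_def by (rule card_cartesian_product)
  have n3': "n \<ge> 3" using n3 unfolding n_def .
  have "n \<le> n * m" using m1 by simp
  then have nm3: "n * m \<ge> 3" using n3' by linarith
  have K: "real (n choose 3) > 0" using n3' by simp
  have N: "real ((n * m) choose 3) > 0" using nm3 by simp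
  have dG: "density F G = real c / real (n choose 3)"
    using n3' unfolding density_def Let_def F3 c_def n_def by simp
  have dI: "density F (inflate G H) = real (card A) / real ((n * m) choose 3)"
    using nm3 unfolding density_def Let_def F3 cI A_def fI[symmetric] by simp
  have r: "r = real ((n choose 3) * m ^ 3) / real ((n * m) choose 3)"
    unfolding r_def n_def m_def ..
  have e1: "density F G * r = real (c * m ^ 3) / real ((n * m) choose 3)"
    unfolding dG r using K by (simp add: field_simps)
  have i1: "real (c * m ^ 3) \<le> real (card A)" using cb by linarith
  have i2: "real (card A) \<le> real (c * m ^ 3) + real ((n * m) choose 3) - real ((n choose 3) * m ^ 3)"
  proof -
    have "real (card A + (n choose 3) * m ^ 3) \<le> real (c * m ^ 3 + ((n * m) choose 3))"
      using cb of_nat_mono by blast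
    then show ?thesis by simp
  qed
  have "density F G * r \<le> density F (inflate G H)"
    unfolding e1 dI using i1 N by (simp add: divide_right_mono)
  moreover have "density F (inflate G H) \<le> density F G * r + 1 - r"
  proof -
    have "density F (inflate G H) \<le> (real (c * m ^ 3) + real ((n * m) choose 3) - real ((n choose 3) * m ^ 3)) / real ((n * m) choose 3)"
      unfolding dI using i2 N by (simp add: divide_right_mono)
    also have "\<dots> = real (c * m ^ 3) / real ((n * m) choose 3) + 1 - real ((n choose 3) * m ^ 3) / real ((n * m) choose 3)"
      using N by (simp add: field_simps)
    also have "\<dots> = density F G * r + 1 - r"
      unfolding e1 by (simp only: r)
    finally show ?thesis .
  qed
  ultimately show ?thesis by blast
qed

lemma ratio_lim:
  fixes a :: "nat \<Rightarrow> nat"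
  assumes a: "filterlim a at_top sequentially" and m1: "m \<ge> 1"
  shows "(\<lambda>i. real ((a i choose 3) * m ^ 3) / real ((a i * m) choose 3)) \<longlonglongrightarrow> 1"
proof -
  have ra: "filterlim (\<lambda>i. real (a i)) at_top sequentially"
    by (rule filterlim_compose[OF filterlim_real_sequentially a])
  have u: "(\<lambda>i. inverse (real (a i))) \<longlonglongrightarrow> 0" by (rule tendsto_inverse_0_at_top[OF ra])
  define M where "M = real m"
  have M: "M \<ge> 1" using m1 unfolding M_def by simp
  have lim: "(\<lambda>i. (1 - inverse (real (a i))) * (1 - 2 * inverse (real (a i))) /
      ((1 - inverse (real (a i)) / M) * (1 - 2 * inverse (real (a i)) / M)))
      \<longlonglongrightarrow> (1 - 0) * (1 - 2 * 0) / ((1 - 0 / M) * (1 - 2 * 0 / M))"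
    by (intro tendsto_intros u) (use M in auto)
  then have lim': "(\<lambda>i. (1 - inverse (real (a i))) * (1 - 2 * inverse (real (a i))) /
      ((1 - inverse (real (a i)) / M) * (1 - 2 * inverse (real (a i)) / M))) \<longlonglongrightarrow> 1"
    by simp
  have ev: "eventually (\<lambda>i. 3 \<le> a i) sequentially" using a unfolding filterlim_at_top by blast
  have "eventually (\<lambda>i. (1 - inverse (real (a i))) * (1 - 2 * inverse (real (a i))) /
      ((1 - inverse (real (a i)) / M) * (1 - 2 * inverse (real (a i)) / M))
      = real ((a i choose 3) * m ^ 3) / real ((a i * m) choose 3)) sequentially"
    using ev
  proof eventually_elim
    case (elim i)
    define x where "x = real (a i)"
    have x: "x \<ge> 3" using elim unfolding x_def by simp
    have xM: "x * M \<ge> 3"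
    proof -
      have "3 * 1 \<le> x * M" by (rule mult_mono[OF x M]) (use x in auto)
      then show ?thesis by simp
    qed
    have e: "real ((a i choose 3) * m ^ 3) / real ((a i * m) choose 3)
        = (x * (x - 1) * (x - 2) / 6 * M ^ 3) / ((x * M) * (x * M - 1) * (x * M - 2) / 6)"
      unfolding x_def M_def of_nat_mult choose3 of_nat_power ..
    have n1: "x * M - 1 \<noteq> 0" "x * M - 2 \<noteq> 0" "x \<noteq> 0" "M \<noteq> 0" using x xM M by auto
    have aa: "(1 - inverse x)*(1-2*inverse x) = (x-1)*(x-2)/x^2" using n1 by (simp add: field_simps power2_eq_square)
    have bb: "(1-inverse x/M)*(1-2*inverse x/M) = (x*M-1)*(x*M-2)/(x*M)^2" using n1 by (simp add: field_simps power2_eq_square)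
    have cc: "(x*(x-1)*(x-2)/6*M^3)/((x*M)*(x*M-1)*(x*M-2)/6) = (x*(x-1)*(x-2)*M^3)/((x*M)*(x*M-1)*(x*M-2))"
      by simp
    have dd: "((x-1)*(x-2)/x^2) / ((x*M-1)*(x*M-2)/(x*M)^2) = ((x-1)*(x-2)*(x*M)^2) / (x^2 * ((x*M-1)*(x*M-2)))"
      by simp
    have den1: "x^2 * ((x*M-1)*(x*M-2)) \<noteq> 0" using n1 by simp
    have den2: "(x*M)*(x*M-1)*(x*M-2) \<noteq> 0" using n1 by simp
    show ?case unfolding e x_def[symmetric] aa bb cc dd frac_eq_eq[OF den1 den2] by algebra
  qed
  then show ?thesis by (rule Lim_transform_eventually[OF lim'])
qed

lemma conv:
  assumes sg: "\<And>i. simple_graph (Gs i)"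
    and lim: "filterlim (\<lambda>i. card (fst (Gs i))) at_top sequentially"
    and sh: "simple_graph H" and ne: "fst H \<noteq> {}" and F3: "card (fst F) = 3"
    and d: "\<And>i. card (fst (Gs i)) \<ge> 3 \<Longrightarrow> density F (Gs i) = dd"
  shows "(\<lambda>i. density F (inflate (Gs i) H)) \<longlonglongrightarrow> dd"
proof -
  define m where "m = card (fst H)"
  have fH: "finite (fst H)" using sh unfolding simple_graph_def by blast
  have m1: "m \<ge> 1" using fH ne unfolding m_def by (simp add: Suc_le_eq card_gt_0_iff)
  define r where "r = (\<lambda>i. real ((card (fst (Gs i)) choose 3) * m ^ 3) / real ((card (fst (Gs i)) * m) choose 3))"
  have r: "r \<longlonglongrightarrow> 1" unfolding r_def by (rule ratio_lim[OF lim m1])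
  have ev3: "eventually (\<lambda>i. 3 \<le> card (fst (Gs i))) sequentially"
    using lim unfolding filterlim_at_top by blast
  have evl: "eventually (\<lambda>i. dd * r i \<le> density F (inflate (Gs i) H)) sequentially"
    using ev3
  proof eventually_elim
    case (elim i)
    show ?case using dens_bounds[OF sg sh ne F3 elim] d[OF elim] unfolding r_def m_def by simp
  qed
  have evu: "eventually (\<lambda>i. density F (inflate (Gs i) H) \<le> dd * r i + 1 - r i) sequentially"
    using ev3
  proof eventually_elim
    case (elim i)
    show ?case using dens_bounds[OF sg sh ne F3 elim] d[OF elim] unfolding r_def m_def by simp
  qed
  have l1: "(\<lambda>i. dd * r i) \<longlonglongrightarrow> dd * 1" by (intro tendsto_intros r)
  have l2: "(\<lambda>i. dd * r i + 1 - r i) \<longlonglongrightarrow> dd * 1 + 1 - 1" by (intro tendsto_intros r)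
  show ?thesis using tendsto_sandwich[OF evl evu] l1 l2 by simp
qed

theorem mainTheorem18:
  fixes Gs :: "nat \<Rightarrow> nat graph" and H :: "'b graph"
  assumes "\<And>i. simple_graph (Gs i)"
    and "\<And>i. three_symmetric (Gs i)"
    and "filterlim (\<lambda>i. card (fst (Gs i))) at_top sequentially"
    and "simple_graph H" and "three_symmetric H" and "fst H \<noteq> {}"
  shows "(\<lambda>i. density K3 (inflate (Gs i) H)) \<longlonglongrightarrow> 1/8
    \<and> (\<lambda>i. density P3 (inflate (Gs i) H)) \<longlonglongrightarrow> 3/8
    \<and> (\<lambda>i. density K2K1 (inflate (Gs i) H)) \<longlonglongrightarrow> 3/8
    \<and> (\<lambda>i. density coK3 (inflate (Gs i) H)) \<longlonglongrightarrow> 1/8"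
proof -
  have ts: "density K3 (Gs i) = 1/8 \<and> density P3 (Gs i) = 3/8 \<and> density K2K1 (Gs i) = 3/8 \<and> density coK3 (Gs i) = 1/8"
    if "card (fst (Gs i)) \<ge> 3" for i
    using assms(2)[of i] that unfolding three_symmetric_def by blast
  have c1: "card (fst K3) = 3" by (simp add: K3_def)
  have c2: "card (fst P3) = 3" by (simp add: P3_def)
  have c3: "card (fst K2K1) = 3" by (simp add: K2K1_def)
  have c4: "card (fst coK3) = 3" by (simp add: coK3_def)
  have l1: "(\<lambda>i. density K3 (inflate (Gs i) H)) \<longlonglongrightarrow> 1/8"
    by (rule conv[OF assms(1) assms(3) assms(4) assms(6) c1]) (use ts in blast)
  have l2: "(\<lambda>i. density P3 (inflate (Gs i) H)) \<longlonglongrightarrow> 3/8"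
    by (rule conv[OF assms(1) assms(3) assms(4) assms(6) c2]) (use ts in blast)
  have l3: "(\<lambda>i. density K2K1 (inflate (Gs i) H)) \<longlonglongrightarrow> 3/8"
    by (rule conv[OF assms(1) assms(3) assms(4) assms(6) c3]) (use ts in blast)
  have l4: "(\<lambda>i. density coK3 (inflate (Gs i) H)) \<longlonglongrightarrow> 1/8"
    by (rule conv[OF assms(1) assms(3) assms(4) assms(6) c4]) (use ts in blast)
  show ?thesis using l1 l2 l3 l4 by blast
qed

end
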